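(* Let $\Omega\subset\mathbb{R}^2$ be open and bounded with Lipschitz boundary, let $f\in L^2(\Omega)$ be not identically zero, and for $\lambda_1,\lambda_2>0$ let $(u^*,v^* )=(u^*_{\lambda_1,\lambda_2},v^*_{\lambda_1,\lambda_2})\in BV(\Omega)\times L^2(\Omega)$ be an optimal pair for $$\min_{u\in BV(\Omega),\,v\in L^2(\Omega)}\Big\{|Du|(\Omega)+\lambda_1\|v\|_{L^1(\Omega)}+\frac{\lambda_2}{2}\|f-u-v\|_{L^2(\Omega)}^2\Big\}.$$ Then: (i) for fixed finite $\lambda_2$, $v^*\to0$ in $L^1(\Omega)$ as $\lambda_1\to+\infty$; (ii) for fixed finite $\lambda_1$, $v^*\to f-u^*$ in $L^2(\Omega)$ (i.e. $\|f-u^*-v^*\|_{L^2(\Omega)}\to0$) as $\lambda_2\to+\infty$; (iii) if additionally $f\in BV(\Omega)$ and $f$ is not constant, then $(u^*,v^* )\to(f,0)$ in $L^1(\Omega)\times L^1(\Omega)$ as $\lambda_1,\lambda_2\to+\infty$.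
   Context: $|Du|(\Omega)$ denotes the total variation of $u$ and $BV(\Omega)$ the space of functions of bounded variation. *)

theory Defs
  imports "HOL-Analysis.Analysis"
begin

type_synonym R2 = "real ^ 2"

definition divergence :: "(R2 \<Rightarrow> R2) \<Rightarrow> R2 \<Rightarrow> real" where
  "divergence \<phi> x = (\<Sum>i\<in>UNIV. (frechet_derivative \<phi> (at x) (axis i 1)) $ i)"

definition test_fields :: "R2 set \<Rightarrow> (R2 \<Rightarrow> R2) set" where
  "test_fields \<Omega> = {\<phi>.
      (\<exists>\<phi>'. (\<forall>x. (\<phi> has_derivative \<phi>' x) (at x)) \<and>
            (\<forall>i. continuous_on UNIV (\<lambda>x. \<phi>' x (axis i 1)))) \<and>
      (\<exists>K. compact K \<and> K \<subseteq> \<Omega> \<and> (\<forall>x. x \<notin> K \<longrightarrow> \<phi> x = 0)) \<and>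
      (\<forall>x. norm (\<phi> x) \<le> 1)}"

definition total_variation :: "R2 set \<Rightarrow> (R2 \<Rightarrow> real) \<Rightarrow> ereal" where
  "total_variation \<Omega> u =
     (SUP \<phi>\<in>test_fields \<Omega>. ereal (LINT x:\<Omega>|lebesgue. u x * divergence \<phi> x))"

definition BV :: "R2 set \<Rightarrow> (R2 \<Rightarrow> real) \<Rightarrow> bool" where
  "BV \<Omega> u \<longleftrightarrow> set_integrable lebesgue \<Omega> u \<and> total_variation \<Omega> u < \<infinity>"

definition L2 :: "R2 set \<Rightarrow> (R2 \<Rightarrow> real) \<Rightarrow> bool" where
  "L2 \<Omega> f \<longleftrightarrow> set_borel_measurable lebesgue \<Omega> f \<and>
                set_integrable lebesgue \<Omega> (\<lambda>x. (f x)\<^sup>2)"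

definition lipschitz_boundary :: "R2 set \<Rightarrow> bool" where
  "lipschitz_boundary \<Omega> \<longleftrightarrow>
     (\<forall>p\<in>frontier \<Omega>. \<exists>r>0. \<exists>(R :: R2 \<Rightarrow> R2) g (L::real).
        orthogonal_transformation R \<and> L-lipschitz_on UNIV (g :: real \<Rightarrow> real) \<and>
        \<Omega> \<inter> ball p r = {x \<in> ball p r. (R (x - p)) $ 2 > g ((R (x - p)) $ 1)})"

definition energy :: "R2 set \<Rightarrow> (R2 \<Rightarrow> real) \<Rightarrow> real \<Rightarrow> real \<Rightarrow> (R2 \<Rightarrow> real) \<Rightarrow> (R2 \<Rightarrow> real) \<Rightarrow> ereal" where
  "energy \<Omega> f l1 l2 u v =
     total_variation \<Omega> u
     + ereal l1 * enn2ereal (\<integral>\<^sup>+x\<in>\<Omega>. ennreal \<bar>v x\<bar> \<partial>lebesgue)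
     + ereal (l2 / 2) * enn2ereal (\<integral>\<^sup>+x\<in>\<Omega>. ennreal ((f x - u x - v x)\<^sup>2) \<partial>lebesgue)"

definition optimal_pair :: "R2 set \<Rightarrow> (R2 \<Rightarrow> real) \<Rightarrow> real \<Rightarrow> real \<Rightarrow> (R2 \<Rightarrow> real) \<Rightarrow> (R2 \<Rightarrow> real) \<Rightarrow> bool" where
  "optimal_pair \<Omega> f l1 l2 u v \<longleftrightarrow>
     BV \<Omega> u \<and> L2 \<Omega> v \<and>
     (\<forall>u' v'. BV \<Omega> u' \<longrightarrow> L2 \<Omega> v' \<longrightarrow> energy \<Omega> f l1 l2 u v \<le> energy \<Omega> f l1 l2 u' v')"

end

theory Submission imports Defs begin

lemma zero_test_field: "(\<lambda>x. 0) \<in> test_fields \<Omega>"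
  unfolding test_fields_def
  by (auto intro!: exI[of _ "\<lambda>x h. 0"] exI[of _ "{}"])

lemma tv_nonneg: "total_variation \<Omega> u \<ge> 0"
proof -
  have "divergence (\<lambda>x. 0) x = 0" for x unfolding divergence_def by simp
  then show ?thesis unfolding total_variation_def
    using zero_test_field[of \<Omega>]
    by (intro SUP_upper2[of "\<lambda>x. 0"]) auto
qed

lemma tv_zero: "total_variation \<Omega> (\<lambda>x. 0) = 0"
proof -
  have "total_variation \<Omega> (\<lambda>x. 0) \<le> 0"
    unfolding total_variation_def by (intro SUP_least) simp
  then show ?thesis using tv_nonneg[of \<Omega> "\<lambda>x. 0"] by simp
qed

lemma BV_zero: "BV \<Omega> (\<lambda>x. 0)"
  unfolding BV_def using tv_zero by simp

lemma ind_ennreal: "ennreal (indicator A x * g x) = ennreal (g x) * indicator A x"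
  by (cases "x \<in> A") auto

lemma lint_le:
  fixes g :: "'a \<Rightarrow> real"
  assumes g0: "\<And>x. g x \<ge> 0" and le: "(\<integral>\<^sup>+x\<in>A. ennreal (g x) \<partial>M) \<le> ennreal c" and c0: "c \<ge> 0"
  shows "(LINT x:A|M. g x) \<le> c"
proof (cases "set_integrable M A g")
  case True
  have "ennreal (LINT x:A|M. g x) = (\<integral>\<^sup>+x. ennreal (indicator A x *\<^sub>R g x) \<partial>M)"
    unfolding set_lebesgue_integral_def
    using True unfolding set_integrable_def
    by (intro nn_integral_eq_integral[symmetric]) (auto simp: g0)
  also have "\<dots> = (\<integral>\<^sup>+x\<in>A. ennreal (g x) \<partial>M)" by (simp add: ind_ennreal)
  finally show ?thesis using le c0 by (simp add: ennreal_le_iff[symmetric])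
next
  case False
  then show ?thesis unfolding set_lebesgue_integral_def set_integrable_def
    using c0 by (simp add: not_integrable_integral_eq)
qed

lemma eb_aux:
  fixes T b :: ereal and A :: ennreal and l1 K :: real
  assumes "T \<ge> 0" "b \<ge> 0" "l1 > 0" "T + ereal l1 * enn2ereal A + b \<le> ereal K"
  shows "A \<le> ennreal (K / l1)"
proof -
  define a where "a = enn2ereal A"
  have a0: "a \<ge> 0" unfolding a_def by simp
  have "ereal l1 * a \<le> T + ereal l1 * a + b"
    using assms(1,2) by (metis add.commute add_increasing add_increasing2 order_refl)
  also have "\<dots> \<le> ereal K" using assms(4) a_def by simp
  finally have le: "ereal l1 * a \<le> ereal K" .
  have "a \<noteq> \<infinity>" using le assms(3) by auto
  then obtain r where r: "a = ereal r" using a0 by (cases a) auto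
  have r0: "r \<ge> 0" using a0 r by simp
  have "l1 * r \<le> K" using le r by simp
  then have rK: "r \<le> K / l1" using assms(3) by (simp add: field_simps)
  have "K / l1 \<ge> 0" using rK r0 by linarith
  then show ?thesis using rK r a_def
    by (simp add: less_eq_ennreal.rep_eq)
qed

lemma set_nn_eq:
  fixes g :: "'a \<Rightarrow> real"
  assumes "set_integrable M A g" "\<And>x. g x \<ge> 0"
  shows "(\<integral>\<^sup>+x\<in>A. ennreal (g x) \<partial>M) = ennreal (LINT x:A|M. g x)"
proof -
  have "ennreal (LINT x:A|M. g x) = (\<integral>\<^sup>+x. ennreal (indicator A x *\<^sub>R g x) \<partial>M)"
    unfolding set_lebesgue_integral_def
    using assms unfolding set_integrable_def
    by (intro nn_integral_eq_integral[symmetric]) auto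
  also have "\<dots> = (\<integral>\<^sup>+x\<in>A. ennreal (g x) \<partial>M)" by (simp add: ind_ennreal)
  finally show ?thesis by simp
qed

lemma meas_comp:
  fixes g :: "'a \<Rightarrow> real"
  assumes "(\<lambda>x. indicator A x * g x) \<in> borel_measurable M" "h \<in> borel_measurable borel"
    "A \<in> sets M"
  shows "(\<lambda>x. ennreal (h (g x)) * indicator A x) \<in> borel_measurable M"
proof -
  have "(\<lambda>x. ennreal (h (g x)) * indicator A x) = (\<lambda>x. ennreal (h (indicator A x * g x)) * indicator A x)"
    by (auto simp: fun_eq_iff split: split_indicator)
  moreover have "(\<lambda>x. h (indicator A x * g x)) \<in> borel_measurable M"
    using measurable_compose[OF assms(1) assms(2)] by simp
  ultimately show ?thesis using assms(3) by simp
qed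

lemma energy_bound:
  fixes T :: ereal and A B :: ennreal and l1 l2 K :: real
  assumes "T \<ge> 0" "l1 > 0" "l2 > 0"
    "T + ereal l1 * enn2ereal A + ereal (l2/2) * enn2ereal B \<le> ereal K"
  shows "A \<le> ennreal (K / l1)" "B \<le> ennreal (2 * K / l2)"
proof -
  show "A \<le> ennreal (K / l1)"
    by (rule eb_aux[OF assms(1) _ assms(2) assms(4)]) (use assms(3) in simp)
  have "0 \<le> T + ereal l1 * enn2ereal A" using assms(1,2) by simp
  then have "B \<le> ennreal (K / (l2/2))"
    by (rule eb_aux[where b=0]) (use assms in simp_all)
  then show "B \<le> ennreal (2 * K / l2)" by (simp add: mult.commute)
qed


lemma L2_zero: "L2 \<Omega> (\<lambda>x. 0)"
  unfolding L2_def set_borel_measurable_def set_integrable_def by simp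

lemma part_i:
  fixes \<Omega> :: "R2 set" and f u v :: "R2 \<Rightarrow> real"
  assumes "L2 \<Omega> f" and opt: "optimal_pair \<Omega> f l1 l2 u v" and "l1 > 0" "l2 > 0"
  shows "(LINT x:\<Omega>|lebesgue. \<bar>v x\<bar>) \<le> (l2/2 * (LINT x:\<Omega>|lebesgue. (f x)\<^sup>2)) / l1"
proof -
  define C where "C = (LINT x:\<Omega>|lebesgue. (f x)\<^sup>2)"
  have f2: "set_integrable lebesgue \<Omega> (\<lambda>x. (f x)\<^sup>2)" using assms(1) unfolding L2_def by simp
  have C0: "C \<ge> 0" unfolding C_def set_lebesgue_integral_def by (intro Bochner_Integration.integral_nonneg) simp
  have "energy \<Omega> f l1 l2 u v \<le> energy \<Omega> f l1 l2 (\<lambda>x. 0) (\<lambda>x. 0)"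
    using opt BV_zero L2_zero unfolding optimal_pair_def by blast
  also have "\<dots> = ereal (l2/2 * C)"
    unfolding energy_def tv_zero using set_nn_eq[OF f2] C0 by (simp add: C_def zero_ennreal.rep_eq)
  finally have "total_variation \<Omega> u + ereal l1 * enn2ereal (\<integral>\<^sup>+x\<in>\<Omega>. ennreal \<bar>v x\<bar> \<partial>lebesgue)
     + ereal (l2 / 2) * enn2ereal (\<integral>\<^sup>+x\<in>\<Omega>. ennreal ((f x - u x - v x)\<^sup>2) \<partial>lebesgue) \<le> ereal (l2/2 * C)"
    unfolding energy_def .
  from energy_bound(1)[OF tv_nonneg assms(3,4) this]
  have "(\<integral>\<^sup>+x\<in>\<Omega>. ennreal \<bar>v x\<bar> \<partial>lebesgue) \<le> ennreal (l2/2 * C / l1)" .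
  from lint_le[OF _ this] show ?thesis unfolding C_def[symmetric]
    using C0 assms by auto
qed


lemma f_L1:
  fixes \<Omega> :: "R2 set" and f :: "R2 \<Rightarrow> real"
  assumes "open \<Omega>" "bounded \<Omega>" "L2 \<Omega> f"
  shows "set_integrable lebesgue \<Omega> (\<lambda>x. \<bar>f x\<bar>)"
proof -
  have Om: "\<Omega> \<in> lmeasurable" using assms by (simp add: lmeasurable_open)
  have f2: "integrable lebesgue (\<lambda>x. indicator \<Omega> x *\<^sub>R (f x)\<^sup>2)"
    using assms(3) unfolding L2_def set_integrable_def by simp
  have fm: "(\<lambda>x. indicator \<Omega> x *\<^sub>R f x) \<in> borel_measurable lebesgue"
    using assms(3) unfolding L2_def set_borel_measurable_def by simp
  have i1: "integrable lebesgue (\<lambda>x. indicator \<Omega> x :: real)"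
    using Om by (intro integrable_real_indicator) (auto simp: fmeasurable_def)
  have ib: "integrable lebesgue (\<lambda>x. indicator \<Omega> x + indicator \<Omega> x *\<^sub>R (f x)\<^sup>2)"
    using i1 f2 by (rule Bochner_Integration.integrable_add)
  show ?thesis unfolding set_integrable_def
  proof (rule Bochner_Integration.integrable_bound[OF ib])
    have "(\<lambda>x. indicator \<Omega> x *\<^sub>R \<bar>f x\<bar>) = (\<lambda>x. \<bar>indicator \<Omega> x *\<^sub>R f x\<bar>)"
      by (auto simp: fun_eq_iff split: split_indicator)
    then show "(\<lambda>x. indicator \<Omega> x *\<^sub>R \<bar>f x\<bar>) \<in> borel_measurable lebesgue"
      using fm by simp
    have "\<bar>f x\<bar> \<le> 1 + (f x)\<^sup>2" for x
    proof -
      have "0 \<le> (\<bar>f x\<bar> - 1)\<^sup>2" by simp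
      then have "0 \<le> \<bar>f x\<bar>\<^sup>2 - 2 * \<bar>f x\<bar> + 1" by (simp add: power2_diff)
      then show ?thesis by simp
    qed
    then show "AE x in lebesgue. norm (indicator \<Omega> x *\<^sub>R \<bar>f x\<bar>) \<le> norm (indicator \<Omega> x + indicator \<Omega> x *\<^sub>R (f x)\<^sup>2)"
      by (auto split: split_indicator)
  qed
qed

lemma part_ii:
  fixes \<Omega> :: "R2 set" and f u v :: "R2 \<Rightarrow> real"
  assumes "L2 \<Omega> f" and f1: "set_integrable lebesgue \<Omega> (\<lambda>x. \<bar>f x\<bar>)"
    and opt: "optimal_pair \<Omega> f l1 l2 u v" and "l1 > 0" "l2 > 0"
  shows "(LINT x:\<Omega>|lebesgue. (f x - u x - v x)\<^sup>2) \<le> 2 * (l1 * (LINT x:\<Omega>|lebesgue. \<bar>f x\<bar>)) / l2"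
proof -
  define C where "C = (LINT x:\<Omega>|lebesgue. \<bar>f x\<bar>)"
  have C0: "C \<ge> 0" unfolding C_def set_lebesgue_integral_def by (intro Bochner_Integration.integral_nonneg) simp
  have "energy \<Omega> f l1 l2 u v \<le> energy \<Omega> f l1 l2 (\<lambda>x. 0) f"
    using opt BV_zero assms(1) unfolding optimal_pair_def by blast
  also have "\<dots> = ereal (l1 * C)"
    unfolding energy_def tv_zero using set_nn_eq[OF f1] C0 by (simp add: C_def zero_ennreal.rep_eq)
  finally have "total_variation \<Omega> u + ereal l1 * enn2ereal (\<integral>\<^sup>+x\<in>\<Omega>. ennreal \<bar>v x\<bar> \<partial>lebesgue)
     + ereal (l2 / 2) * enn2ereal (\<integral>\<^sup>+x\<in>\<Omega>. ennreal ((f x - u x - v x)\<^sup>2) \<partial>lebesgue) \<le> ereal (l1 * C)"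
    unfolding energy_def .
  from energy_bound(2)[OF tv_nonneg assms(4,5) this]
  have "(\<integral>\<^sup>+x\<in>\<Omega>. ennreal ((f x - u x - v x)\<^sup>2) \<partial>lebesgue) \<le> ennreal (2 * (l1 * C) / l2)" .
  from lint_le[OF _ this] show ?thesis unfolding C_def[symmetric]
    using C0 assms by auto
qed

lemma part_iii:
  fixes \<Omega> :: "R2 set" and f u v :: "R2 \<Rightarrow> real"
  assumes "BV \<Omega> f" and opt: "optimal_pair \<Omega> f l1 l2 u v" and "l1 > 0" "l2 > 0"
  shows "(\<integral>\<^sup>+x\<in>\<Omega>. ennreal \<bar>v x\<bar> \<partial>lebesgue) \<le> ennreal (real_of_ereal (total_variation \<Omega> f) / l1)"
    "(\<integral>\<^sup>+x\<in>\<Omega>. ennreal ((f x - u x - v x)\<^sup>2) \<partial>lebesgue) \<le> ennreal (2 * real_of_ereal (total_variation \<Omega> f) / l2)"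
proof -
  define T where "T = real_of_ereal (total_variation \<Omega> f)"
  have "total_variation \<Omega> f < \<infinity>" using assms(1) unfolding BV_def by simp
  then have TT: "total_variation \<Omega> f = ereal T" unfolding T_def
    using tv_nonneg[of \<Omega> f] by (cases "total_variation \<Omega> f") auto
  have "energy \<Omega> f l1 l2 u v \<le> energy \<Omega> f l1 l2 f (\<lambda>x. 0)"
    using opt assms(1) L2_zero unfolding optimal_pair_def by blast
  also have "\<dots> = ereal T"
    unfolding energy_def TT by (simp add: zero_ennreal.rep_eq)
  finally have *: "total_variation \<Omega> u + ereal l1 * enn2ereal (\<integral>\<^sup>+x\<in>\<Omega>. ennreal \<bar>v x\<bar> \<partial>lebesgue)
     + ereal (l2 / 2) * enn2ereal (\<integral>\<^sup>+x\<in>\<Omega>. ennreal ((f x - u x - v x)\<^sup>2) \<partial>lebesgue) \<le> ereal T"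
    unfolding energy_def .
  show "(\<integral>\<^sup>+x\<in>\<Omega>. ennreal \<bar>v x\<bar> \<partial>lebesgue) \<le> ennreal (real_of_ereal (total_variation \<Omega> f) / l1)"
    using energy_bound(1)[OF tv_nonneg assms(3,4) *] unfolding T_def .
  show "(\<integral>\<^sup>+x\<in>\<Omega>. ennreal ((f x - u x - v x)\<^sup>2) \<partial>lebesgue) \<le> ennreal (2 * real_of_ereal (total_variation \<Omega> f) / l2)"
    using energy_bound(2)[OF tv_nonneg assms(3,4) *] unfolding T_def .
qed


lemma pw_bound:
  fixes a b c s :: real assumes "s > 0" and that: "\<bar>a\<bar> \<le> \<bar>c\<bar> + \<bar>b\<bar>"
  shows "\<bar>a\<bar> \<le> \<bar>c\<bar> + 1 / (2 * s) + s / 2 * (b)\<^sup>2"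
proof -
  have "0 \<le> (s * \<bar>b\<bar> - 1)\<^sup>2" by simp
  then have "0 \<le> s\<^sup>2 * \<bar>b\<bar>\<^sup>2 - 2 * s * \<bar>b\<bar> + 1" by (simp add: power2_diff power_mult_distrib)
  then have "2 * s * \<bar>b\<bar> \<le> s\<^sup>2 * b\<^sup>2 + 1" by simp
  then have "\<bar>b\<bar> \<le> (s\<^sup>2 * b\<^sup>2 + 1) / (2 * s)" using assms by (simp add: field_simps)
  also have "\<dots> = 1 / (2 * s) + s / 2 * b\<^sup>2" using assms by (simp add: field_simps power2_eq_square)
  finally show ?thesis using that by linarith
qed

lemma ennreal_sum3:
  "0 \<le> a \<Longrightarrow> 0 \<le> b \<Longrightarrow> 0 \<le> c \<Longrightarrow> 0 \<le> d \<Longrightarrow> 0 \<le> (g::real) \<Longrightarrow>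
   ennreal (a + b * c + d * g) = ennreal a + ennreal b * ennreal c + ennreal d * ennreal g"
  by (simp add: ennreal_plus ennreal_mult)

lemma u_bound:
  fixes \<Omega> :: "R2 set" and f u v :: "R2 \<Rightarrow> real"
  assumes "open \<Omega>" "bounded \<Omega>" "BV \<Omega> f" "BV \<Omega> u" "L2 \<Omega> v" "s > 0" "a \<ge> 0" "b \<ge> 0"
    and A: "(\<integral>\<^sup>+x\<in>\<Omega>. ennreal \<bar>v x\<bar> \<partial>lebesgue) \<le> ennreal a"
    and B: "(\<integral>\<^sup>+x\<in>\<Omega>. ennreal ((f x - u x - v x)\<^sup>2) \<partial>lebesgue) \<le> ennreal b"
  shows "(LINT x:\<Omega>|lebesgue. \<bar>u x - f x\<bar>) \<le> a + measure lebesgue \<Omega> / (2 * s) + s / 2 * b"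
proof -
  have Om: "\<Omega> \<in> lmeasurable" using assms by (simp add: lmeasurable_open)
  then have Oms: "\<Omega> \<in> sets lebesgue" by (rule fmeasurableD)
  have Omf: "emeasure lebesgue \<Omega> = ennreal (measure lebesgue \<Omega>)"
    using Om unfolding fmeasurable_def by (intro emeasure_eq_ennreal_measure) auto
  have fm: "(\<lambda>x. indicator \<Omega> x * f x) \<in> borel_measurable lebesgue"
    using assms(3) unfolding BV_def set_integrable_def by (auto dest: borel_measurable_integrable)
  have um: "(\<lambda>x. indicator \<Omega> x * u x) \<in> borel_measurable lebesgue"
    using assms(4) unfolding BV_def set_integrable_def by (auto dest: borel_measurable_integrable)
  have vm: "(\<lambda>x. indicator \<Omega> x * v x) \<in> borel_measurable lebesgue"
    using assms(5) unfolding L2_def set_borel_measurable_def by simp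
  have gm: "(\<lambda>x. indicator \<Omega> x * (f x - u x - v x)) \<in> borel_measurable lebesgue"
  proof -
    have "(\<lambda>x. indicator \<Omega> x * (f x - u x - v x)) =
       (\<lambda>x. indicator \<Omega> x * f x - indicator \<Omega> x * u x - indicator \<Omega> x * v x)"
      by (simp add: fun_eq_iff algebra_simps)
    then show ?thesis using fm um vm by simp
  qed
  have m1: "(\<lambda>x. ennreal \<bar>v x\<bar> * indicator \<Omega> x) \<in> borel_measurable lebesgue"
    using meas_comp[OF vm _ Oms, of abs] by simp
  have m2: "(\<lambda>x. ennreal ((f x - u x - v x)\<^sup>2) * indicator \<Omega> x) \<in> borel_measurable lebesgue"
    using meas_comp[OF gm _ Oms, of "\<lambda>y. y\<^sup>2"] by simp
  have m3: "(\<lambda>x. ennreal (1 / (2 * s)) * indicator \<Omega> x) \<in> borel_measurable lebesgue"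
    using Oms by simp
  have "(\<integral>\<^sup>+x\<in>\<Omega>. ennreal \<bar>u x - f x\<bar> \<partial>lebesgue) \<le>
     (\<integral>\<^sup>+x. ennreal \<bar>v x\<bar> * indicator \<Omega> x + ennreal (1 / (2 * s)) * indicator \<Omega> x
         + ennreal (s / 2) * (ennreal ((f x - u x - v x)\<^sup>2) * indicator \<Omega> x) \<partial>lebesgue)"
  proof (rule nn_integral_mono)
    fix x
    have "\<bar>u x - f x\<bar> \<le> \<bar>v x\<bar> + \<bar>f x - u x - v x\<bar>" by linarith
    then have "\<bar>u x - f x\<bar> \<le> \<bar>v x\<bar> + 1 / (2 * s) + s / 2 * (f x - u x - v x)\<^sup>2"
      by (rule pw_bound[OF assms(6)])
    then have "ennreal \<bar>u x - f x\<bar> \<le> ennreal (\<bar>v x\<bar> + 1 / (2 * s) + s / 2 * (f x - u x - v x)\<^sup>2)"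
      by (rule ennreal_leI)
    also have "\<dots> = ennreal \<bar>v x\<bar> + ennreal (1 / (2 * s)) * ennreal 1 + ennreal (s / 2) * ennreal ((f x - u x - v x)\<^sup>2)"
      using ennreal_sum3[of "\<bar>v x\<bar>" "1 / (2 * s)" 1 "s/2" "(f x - u x - v x)\<^sup>2"] assms(6) by simp
    finally show "ennreal \<bar>u x - f x\<bar> * indicator \<Omega> x \<le> ennreal \<bar>v x\<bar> * indicator \<Omega> x + ennreal (1 / (2 * s)) * indicator \<Omega> x
         + ennreal (s / 2) * (ennreal ((f x - u x - v x)\<^sup>2) * indicator \<Omega> x)"
      by (auto split: split_indicator)
  qed
  also have "\<dots> = (\<integral>\<^sup>+x\<in>\<Omega>. ennreal \<bar>v x\<bar> \<partial>lebesgue) + ennreal (1 / (2 * s)) * emeasure lebesgue \<Omega>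
       + ennreal (s / 2) * (\<integral>\<^sup>+x\<in>\<Omega>. ennreal ((f x - u x - v x)\<^sup>2) \<partial>lebesgue)"
    using m1 m2 m3 Oms
    by (simp add: nn_integral_add nn_integral_cmult nn_integral_cmult_indicator)
  also have "\<dots> \<le> ennreal a + ennreal (1 / (2 * s)) * ennreal (measure lebesgue \<Omega>) + ennreal (s / 2) * ennreal b"
    unfolding Omf by (intro add_mono mult_left_mono A B order_refl) auto
  also have "\<dots> = ennreal (a + 1 / (2 * s) * measure lebesgue \<Omega> + s / 2 * b)"
    using ennreal_sum3[of a "1 / (2 * s)" "measure lebesgue \<Omega>" "s/2" b] assms(6,7,8) by simp
  finally have "(LINT x:\<Omega>|lebesgue. \<bar>u x - f x\<bar>) \<le> a + 1 / (2 * s) * measure lebesgue \<Omega> + s / 2 * b"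
    by (intro lint_le) (use assms in auto)
  then show ?thesis by simp
qed


lemma lint_nonneg: "(\<And>x. 0 \<le> g x) \<Longrightarrow> 0 \<le> (LINT x:A|M. (g x :: real))"
  unfolding set_lebesgue_integral_def by (intro Bochner_Integration.integral_nonneg) simp

theorem proposition5p1:
  fixes \<Omega> :: "R2 set" and f :: "R2 \<Rightarrow> real"
    and u v :: "real \<Rightarrow> real \<Rightarrow> R2 \<Rightarrow> real"
  assumes "open \<Omega>" and "bounded \<Omega>" and "lipschitz_boundary \<Omega>"
    and "L2 \<Omega> f" and "\<not> (AE x in lebesgue. x \<in> \<Omega> \<longrightarrow> f x = 0)"
    and opt: "\<And>l1 l2. l1 > 0 \<Longrightarrow> l2 > 0 \<Longrightarrow> optimal_pair \<Omega> f l1 l2 (u l1 l2) (v l1 l2)"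
  shows "(\<forall>l2>0. ((\<lambda>l1. LINT x:\<Omega>|lebesgue. \<bar>v l1 l2 x\<bar>) \<longlongrightarrow> 0) at_top) \<and>
         (\<forall>l1>0. ((\<lambda>l2. sqrt (LINT x:\<Omega>|lebesgue. (f x - u l1 l2 x - v l1 l2 x)\<^sup>2)) \<longlongrightarrow> 0) at_top) \<and>
         (BV \<Omega> f \<and> \<not> (\<exists>c. AE x in lebesgue. x \<in> \<Omega> \<longrightarrow> f x = c) \<longrightarrow>
         ((\<lambda>(l1, l2). LINT x:\<Omega>|lebesgue. \<bar>u l1 l2 x - f x\<bar>) \<longlongrightarrow> 0) (at_top \<times>\<^sub>F at_top)
       \<and> ((\<lambda>(l1, l2). LINT x:\<Omega>|lebesgue. \<bar>v l1 l2 x\<bar>) \<longlongrightarrow> 0) (at_top \<times>\<^sub>F at_top))"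
proof (intro conjI allI impI)
  have inf: "filterlim (\<lambda>x::real. x) at_infinity at_top"
    by (rule filterlim_at_top_imp_at_infinity[OF filterlim_ident])
  fix l2 :: real assume l2: "l2 > 0"
  define K where "K = l2/2 * (LINT x:\<Omega>|lebesgue. (f x)\<^sup>2)"
  show "((\<lambda>l1. LINT x:\<Omega>|lebesgue. \<bar>v l1 l2 x\<bar>) \<longlongrightarrow> 0) at_top"
  proof (rule tendsto_sandwich[of "\<lambda>_. 0" _ _ "\<lambda>l1. K / l1"])
    show "\<forall>\<^sub>F l1 in at_top. 0 \<le> (LINT x:\<Omega>|lebesgue. \<bar>v l1 l2 x\<bar>)"
      by (intro always_eventually allI lint_nonneg) simp
    show "\<forall>\<^sub>F l1 in at_top. (LINT x:\<Omega>|lebesgue. \<bar>v l1 l2 x\<bar>) \<le> K / l1"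
      using eventually_gt_at_top[of "0::real"]
      by eventually_elim (use part_i[OF assms(4) opt[OF _ l2] _ l2] in \<open>simp add: K_def\<close>)
    show "((\<lambda>l1. K / l1) \<longlongrightarrow> 0) at_top"
      by (rule tendsto_divide_0[OF tendsto_const inf])
  qed simp
next
  fix l1 :: real assume l1: "l1 > 0"
  have f1: "set_integrable lebesgue \<Omega> (\<lambda>x. \<bar>f x\<bar>)" using f_L1 assms(1,2,4) by blast
  define K where "K = 2 * (l1 * (LINT x:\<Omega>|lebesgue. \<bar>f x\<bar>))"
  have inf: "filterlim (\<lambda>x::real. x) at_infinity at_top"
    by (rule filterlim_at_top_imp_at_infinity[OF filterlim_ident])
  show "((\<lambda>l2. sqrt (LINT x:\<Omega>|lebesgue. (f x - u l1 l2 x - v l1 l2 x)\<^sup>2)) \<longlongrightarrow> 0) at_top"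
  proof (rule tendsto_sandwich[of "\<lambda>_. 0" _ _ "\<lambda>l2. sqrt (K / l2)"])
    show "\<forall>\<^sub>F l2 in at_top. 0 \<le> sqrt (LINT x:\<Omega>|lebesgue. (f x - u l1 l2 x - v l1 l2 x)\<^sup>2)"
      by (intro always_eventually allI real_sqrt_ge_zero lint_nonneg) simp
    show "\<forall>\<^sub>F l2 in at_top. sqrt (LINT x:\<Omega>|lebesgue. (f x - u l1 l2 x - v l1 l2 x)\<^sup>2) \<le> sqrt (K / l2)"
      using eventually_gt_at_top[of "0::real"]
    proof eventually_elim
      case (elim l2)
      show ?case using part_ii[OF assms(4) f1 opt[OF l1 elim] l1 elim]
        unfolding K_def by (rule real_sqrt_le_mono)
    qed
    show "((\<lambda>l2. sqrt (K / l2)) \<longlongrightarrow> 0) at_top"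
      using tendsto_real_sqrt[OF tendsto_divide_0[OF tendsto_const inf, of K]] by simp
  qed simp
next
  assume fBV: "BV \<Omega> f \<and> \<not> (\<exists>c. AE x in lebesgue. x \<in> \<Omega> \<longrightarrow> f x = c)"
  define T where "T = real_of_ereal (total_variation \<Omega> f)"
  have T0: "T \<ge> 0" unfolding T_def using tv_nonneg by (simp add: real_of_ereal_pos)
  define mu where "mu = measure lebesgue \<Omega>"
  have mu0: "mu \<ge> 0" unfolding mu_def by simp
  have pos: "\<forall>\<^sub>F p in at_top \<times>\<^sub>F at_top. fst p > (0::real) \<and> snd p > (0::real)"
    by (rule eventually_prodI) (rule eventually_gt_at_top)+
  have fstinf: "filterlim (\<lambda>p::real\<times>real. fst p) at_infinity (at_top \<times>\<^sub>F at_top)"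
    by (rule filterlim_at_top_imp_at_infinity[OF filterlim_fst])
  have sqinf: "filterlim (\<lambda>p::real\<times>real. sqrt (snd p)) at_infinity (at_top \<times>\<^sub>F at_top)"
    by (rule filterlim_at_top_imp_at_infinity[OF filterlim_compose[OF sqrt_at_top filterlim_snd]])
  have A: "(\<integral>\<^sup>+x\<in>\<Omega>. ennreal \<bar>v l1 l2 x\<bar> \<partial>lebesgue) \<le> ennreal (T / l1)"
    and B: "(\<integral>\<^sup>+x\<in>\<Omega>. ennreal ((f x - u l1 l2 x - v l1 l2 x)\<^sup>2) \<partial>lebesgue) \<le> ennreal (2 * T / l2)"
    if "l1 > 0" "l2 > 0" for l1 l2
    using part_iii[OF conjunct1[OF fBV] opt[OF that] that] unfolding T_def by auto
  show "((\<lambda>(l1, l2). LINT x:\<Omega>|lebesgue. \<bar>u l1 l2 x - f x\<bar>) \<longlongrightarrow> 0) (at_top \<times>\<^sub>F at_top)"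
  proof (rule tendsto_sandwich[of "\<lambda>_. 0" _ _ "\<lambda>p. T / fst p + (mu / 2 + T) / sqrt (snd p)"])
    show "\<forall>\<^sub>F p in at_top \<times>\<^sub>F at_top. 0 \<le> (case p of (l1, l2) \<Rightarrow> LINT x:\<Omega>|lebesgue. \<bar>u l1 l2 x - f x\<bar>)"
      by (intro always_eventually allI) (auto intro: lint_nonneg)
    show "\<forall>\<^sub>F p in at_top \<times>\<^sub>F at_top. (case p of (l1, l2) \<Rightarrow> LINT x:\<Omega>|lebesgue. \<bar>u l1 l2 x - f x\<bar>)
           \<le> T / fst p + (mu / 2 + T) / sqrt (snd p)"
      using pos
    proof eventually_elim
      case (elim p)
      obtain l1 l2 where p: "p = (l1, l2)" by (cases p)
      with elim have l1: "l1 > 0" and l2: "l2 > 0" by auto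
      have "(LINT x:\<Omega>|lebesgue. \<bar>u l1 l2 x - f x\<bar>) \<le> T / l1 + mu / (2 * sqrt l2) + sqrt l2 / 2 * (2 * T / l2)"
        unfolding mu_def
        by (rule u_bound[OF assms(1,2) conjunct1[OF fBV] _ _ _ _ _ A[OF l1 l2] B[OF l1 l2]])
           (use opt[OF l1 l2] l1 l2 T0 in \<open>auto simp: optimal_pair_def\<close>)
      also have "\<dots> = T / l1 + (mu / 2 + T) / sqrt l2"
      proof -
        have "sqrt l2 / 2 * (2 * T / l2) = T / sqrt l2"
          using l2 by (simp add: field_simps)
        then show ?thesis by (simp add: add_divide_distrib)
      qed
      finally show ?case using p by simp
    qed
    show "((\<lambda>p. T / fst p + (mu / 2 + T) / sqrt (snd p)) \<longlongrightarrow> 0) (at_top \<times>\<^sub>F at_top)"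
      using tendsto_add[OF tendsto_divide_0[OF tendsto_const fstinf] tendsto_divide_0[OF tendsto_const sqinf]]
      by simp
  qed simp
  show "((\<lambda>(l1, l2). LINT x:\<Omega>|lebesgue. \<bar>v l1 l2 x\<bar>) \<longlongrightarrow> 0) (at_top \<times>\<^sub>F at_top)"
  proof (rule tendsto_sandwich[of "\<lambda>_. 0" _ _ "\<lambda>p::real\<times>real. T / fst p"])
    show "\<forall>\<^sub>F p in at_top \<times>\<^sub>F at_top. 0 \<le> (case p of (l1, l2) \<Rightarrow> LINT x:\<Omega>|lebesgue. \<bar>v l1 l2 x\<bar>)"
      by (intro always_eventually allI) (auto intro: lint_nonneg)
    show "\<forall>\<^sub>F p in at_top \<times>\<^sub>F at_top. (case p of (l1, l2) \<Rightarrow> LINT x:\<Omega>|lebesgue. \<bar>v l1 l2 x\<bar>) \<le> T / fst p"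
      using pos
    proof eventually_elim
      case (elim p)
      obtain l1 l2 where p: "p = (l1, l2)" by (cases p)
      with elim have l1: "l1 > 0" and l2: "l2 > 0" by auto
      have "(LINT x:\<Omega>|lebesgue. \<bar>v l1 l2 x\<bar>) \<le> T / l1"
        by (rule lint_le[OF _ A[OF l1 l2]]) (use T0 l1 in auto)
      then show ?case using p by simp
    qed
    show "((\<lambda>p::real\<times>real. T / fst p) \<longlongrightarrow> 0) (at_top \<times>\<^sub>F at_top)"
      using tendsto_divide_0[OF tendsto_const fstinf, of T] by simp
  qed simp
qed

end
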